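(* Consider the following single-NFT sale model. A creator with cost $c\ge 0$ chooses a mint price $p_0\ge 0$ and a royalty rate $r\in[0,1]$. The end-buyer's valuation is a nonnegative random variable $V$ with finite mean $\mu=\mathbb{E}[V]$, whose distribution (but not realization) is known to both the creator and a speculator at the time of purchase. The speculator is risk neutral ($\eta_s=0$) and buys the NFT at price $p_0$ if and only if $(1-r)\mu-p_0\ge 0$; if he buys, he later resells it to the end-buyer at the realized value $V$, and the creator's profit is $p_0+rV-c$. If the speculator does not buy, the creator offers the NFT to the end-buyer at price $p_0$, who buys iff $V\ge p_0$, so the creator's profit is $p_0\mathbb{1}_{\{V\ge p_0\}}-c$. The creator is risk neutral ($\eta_c=0$) and maximizes expected profit. Then every pair $(p_0^*,r^* )$ with $r^*\in[0,1]$, $p_0^*\ge 0$ and $p_0^*=\mu(1-r^* )$ maximizes the creator's expected profit, and the maximal expected profit equals $\mu-c$. *)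

theory Defs
  imports "HOL-Probability.Probability"
begin

definition creator_expected_profit ::
  "'a measure \<Rightarrow> ('a \<Rightarrow> real) \<Rightarrow> real \<Rightarrow> real \<Rightarrow> real \<Rightarrow> real" where
  "creator_expected_profit M V c p0 r =
     (if (1 - r) * (\<integral>x. V x \<partial>M) - p0 \<ge> 0
      then (\<integral>x. p0 + r * V x - c \<partial>M)
      else (\<integral>x. p0 * indicator {y \<in> space M. V y \<ge> p0} x - c \<partial>M))"

end

theory Submission
  imports Defs
begin

theorem theorem1:
  fixes M :: "'a measure" and V :: "'a \<Rightarrow> real" and c p0s rs :: real
  assumes "prob_space M"
    and "V \<in> borel_measurable M"
    and "AE x in M. V x \<ge> 0"
    and "integrable M V"
    and "c \<ge> 0"
    and "rs \<in> {0..1}"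
    and "p0s \<ge> 0"
    and "p0s = (\<integral>x. V x \<partial>M) * (1 - rs)"
  shows "(\<forall>p0 r. p0 \<ge> 0 \<longrightarrow> r \<in> {0..1} \<longrightarrow>
            creator_expected_profit M V c p0 r \<le> creator_expected_profit M V c p0s rs)
         \<and> creator_expected_profit M V c p0s rs = (\<integral>x. V x \<partial>M) - c"
proof -
  interpret P: prob_space M by fact
  define mu where "mu = (\<integral>x. V x \<partial>M)"
  have lin: "(\<integral>x. p0 + r * V x - c \<partial>M) = p0 + r * mu - c" for p0 r
  proof -
    have "(\<integral>x. p0 + r * V x - c \<partial>M) = (\<integral>x. p0 + r * V x \<partial>M) - (\<integral>x. c \<partial>M)"
      using assms(4) by (intro Bochner_Integration.integral_diff) auto
    also have "(\<integral>x. p0 + r * V x \<partial>M) = (\<integral>x. p0 \<partial>M) + (\<integral>x. r * V x \<partial>M)"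
      using assms(4) by (intro Bochner_Integration.integral_add) auto
    finally show ?thesis using mu_def P.prob_space by simp
  qed
  have opt: "creator_expected_profit M V c p0s rs = mu - c"
    using assms(8) lin[of p0s rs] unfolding creator_expected_profit_def mu_def[symmetric]
    by (simp add: algebra_simps)
  have other: "creator_expected_profit M V c p0 r \<le> mu - c" if "p0 \<ge> 0" "r \<in> {0..1}" for p0 r
  proof (cases "(1 - r) * mu - p0 \<ge> 0")
    case True
    then show ?thesis using lin[of p0 r] unfolding creator_expected_profit_def mu_def[symmetric]
      by (simp add: algebra_simps)
  next
    case False
    define S where "S = {y \<in> space M. V y \<ge> p0}"
    have Sm: "S \<in> sets M" unfolding S_def using assms(2) by measurable
    have int1: "integrable M (\<lambda>x. p0 * indicator S x)"
      using Sm by (intro integrable_mult_right) (rule integrable_real_indicator, simp_all add: P.emeasure_finite top.not_eq_extremum[symmetric])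
    have "(\<integral>x. p0 * indicator S x - c \<partial>M) = (\<integral>x. p0 * indicator S x \<partial>M) - (\<integral>x. c \<partial>M)"
      using int1 by (intro Bochner_Integration.integral_diff) auto
    also have "(\<integral>x. p0 * indicator S x \<partial>M) \<le> (\<integral>x. V x \<partial>M)"
    proof (rule integral_mono_AE[OF int1 assms(4)])
      show "AE x in M. p0 * indicator S x \<le> V x"
        using assms(3) by eventually_elim (auto simp: S_def indicator_def)
    qed
    finally show ?thesis using False unfolding creator_expected_profit_def mu_def[symmetric] S_def
      by (simp add: mu_def P.prob_space)
  qed
  show ?thesis using opt other unfolding mu_def by auto
qed

end
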